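(* Let $S$ be an idempotent semiring satisfying the identity $x+xyx+x\approx x$. Then the relation $\sigma$ on $S$ defined by $a\,\sigma\, b$ if and only if $aba=aba+a+aba$ and $bab=bab+b+bab$ is itself the least distributive lattice congruence on $S$.
   Context: An idempotent semiring is an algebra $(S,+,\cdot)$ with two binary operations such that $(S,+)$ and $(S,\cdot)$ are bands (associative, with $x+x=x$ and $xx=x$), and both distributive laws $x(y+z)=xy+xz$ and $(x+y)z=xz+yz$ hold; addition is not assumed commutative. A distributive lattice congruence on $S$ is a congruence $\rho$ such that $S/\rho$ is a distributive lattice, i.e. $S/\rho$ satisfies $x+y\approx y+x$, $xy\approx yx$ and $x+xy\approx x$. *)

theory Defs
  imports Main
begin

definition idempotent_semiring :: "('a \<Rightarrow> 'a \<Rightarrow> 'a) \<Rightarrow> ('a \<Rightarrow> 'a \<Rightarrow> 'a) \<Rightarrow> bool" where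
  "idempotent_semiring add mul \<longleftrightarrow>
     (\<forall>x y z. add (add x y) z = add x (add y z)) \<and> (\<forall>x. add x x = x) \<and>
     (\<forall>x y z. mul (mul x y) z = mul x (mul y z)) \<and> (\<forall>x. mul x x = x) \<and>
     (\<forall>x y z. mul x (add y z) = add (mul x y) (mul x z)) \<and>
     (\<forall>x y z. mul (add x y) z = add (mul x z) (mul y z))"

definition semiring_congruence :: "('a \<Rightarrow> 'a \<Rightarrow> 'a) \<Rightarrow> ('a \<Rightarrow> 'a \<Rightarrow> 'a) \<Rightarrow> ('a \<Rightarrow> 'a \<Rightarrow> bool) \<Rightarrow> bool" where
  "semiring_congruence add mul r \<longleftrightarrow>
     equivp r \<and>
     (\<forall>a b c d. r a b \<and> r c d \<longrightarrow> r (add a c) (add b d)) \<and>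
     (\<forall>a b c d. r a b \<and> r c d \<longrightarrow> r (mul a c) (mul b d))"

text \<open>A distributive lattice congruence: a congruence whose quotient satisfies
x+y = y+x, xy = yx, x + xy = x (identities checked on representatives).\<close>
definition dl_congruence :: "('a \<Rightarrow> 'a \<Rightarrow> 'a) \<Rightarrow> ('a \<Rightarrow> 'a \<Rightarrow> 'a) \<Rightarrow> ('a \<Rightarrow> 'a \<Rightarrow> bool) \<Rightarrow> bool" where
  "dl_congruence add mul r \<longleftrightarrow>
     semiring_congruence add mul r \<and>
     (\<forall>x y. r (add x y) (add y x)) \<and>
     (\<forall>x y. r (mul x y) (mul y x)) \<and>
     (\<forall>x y. r (add x (mul x y)) x)"

end

theory Submission
  imports Defs
begin

locale bandR =
  fixes m :: "'a \<Rightarrow> 'a \<Rightarrow> 'a" (infixr "\<odot>" 70)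
    and R :: "'a \<Rightarrow> 'a \<Rightarrow> bool"
  assumes assoc: "(x \<odot> y) \<odot> z = x \<odot> (y \<odot> z)"
    and idem: "x \<odot> x = x"
    and Rrefl: "R x x" and Rsym: "R x y \<Longrightarrow> R y x" and Rtrans: "R x y \<Longrightarrow> R y z \<Longrightarrow> R x z"
    and Rl: "R x y \<Longrightarrow> R (z \<odot> x) (z \<odot> y)" and Rr: "R x y \<Longrightarrow> R (x \<odot> z) (y \<odot> z)"
begin
lemma idem2: "x \<odot> (x \<odot> y) = x \<odot> y" by (metis assoc idem)

lemma jmeet:
  assumes h1: "R (u \<odot> v \<odot> u) u" and h2: "R (u \<odot> w \<odot> u) u"
  shows "R (u \<odot> v \<odot> w \<odot> u) u"
proof -
  have c11: "R (u \<odot> w \<odot> u \<odot> X) (u \<odot> X)" for X using Rr[OF h2, of X] by (simp add: assoc)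
  have c14: "R (u \<odot> x \<odot> w \<odot> u \<odot> x) (u \<odot> x)" for x
    by (metis c11 Rl Rr Rtrans Rsym assoc idem)
  have c16: "R (u \<odot> x \<odot> w \<odot> u \<odot> x \<odot> y) (u \<odot> x \<odot> y)" for x y
    using Rr[OF c14[of x], of y] by (simp add: assoc)
  have a1: "R (u \<odot> v \<odot> w \<odot> u) (u \<odot> v \<odot> w \<odot> u \<odot> v \<odot> u)"
    using Rl[OF Rsym[OF h1], of "u \<odot> v \<odot> w"] by (simp add: assoc)
  have "R (u \<odot> v \<odot> w \<odot> u) (u \<odot> v \<odot> u)" using Rtrans[OF a1 c16] .
  thus ?thesis using h1 Rtrans by blast
qed

lemma jtrans:
  assumes h1: "R (u \<odot> v \<odot> u) u" and h2: "R (v \<odot> w \<odot> v) v"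
  shows "R (u \<odot> w \<odot> u) u"
proof -
  have c25: "R (u \<odot> v \<odot> w \<odot> v \<odot> u \<odot> X) (u \<odot> X)" for X
  proof -
    have "R (u \<odot> v \<odot> w \<odot> v \<odot> u \<odot> X) (u \<odot> v \<odot> u \<odot> X)"
      using Rl[OF Rr[OF h2, of "u \<odot> X"], of u] by (simp add: assoc)
    moreover have "R (u \<odot> v \<odot> u \<odot> X) (u \<odot> X)" using Rr[OF h1, of X] by (simp add: assoc)
    ultimately show ?thesis using Rtrans by blast
  qed
  have c32: "R (u \<odot> v \<odot> w \<odot> v \<odot> u) u"
  proof -
    have "R (u \<odot> v \<odot> w \<odot> v \<odot> u) (u \<odot> v \<odot> u)"
      using Rl[OF Rr[OF h2, of "u"], of u] by (simp add: assoc)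
    thus ?thesis using h1 Rtrans by blast
  qed
  have e: "u \<odot> v \<odot> w \<odot> v \<odot> u \<odot> w \<odot> v \<odot> u = u \<odot> v \<odot> w \<odot> v \<odot> u"
    by (metis assoc idem)
  have c36: "R (u \<odot> w \<odot> v \<odot> u) u"
    using c25[of "w \<odot> v \<odot> u"] c32 unfolding e by (metis Rsym Rtrans)
  have a1: "R (u \<odot> w \<odot> u) (u \<odot> w \<odot> u \<odot> w \<odot> v \<odot> u)"
    using Rl[OF Rsym[OF c36], of "u \<odot> w"] by (simp add: assoc)
  have "u \<odot> w \<odot> u \<odot> w \<odot> v \<odot> u = u \<odot> w \<odot> v \<odot> u" by (metis assoc idem)
  thus ?thesis using a1 c36 Rtrans by metis
qed


lemma jright:
  assumes h: "R (a \<odot> b \<odot> a) a"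
  shows "R ((a \<odot> c) \<odot> (b \<odot> c) \<odot> (a \<odot> c)) (a \<odot> c)"
proof -
  have j1: "R ((a \<odot> c) \<odot> a \<odot> (a \<odot> c)) (a \<odot> c)" by (metis Rrefl assoc idem)
  have j2: "R ((a \<odot> c) \<odot> b \<odot> (a \<odot> c)) (a \<odot> c)" by (rule jtrans[OF j1 h])
  have j3: "R ((a \<odot> c) \<odot> c \<odot> (a \<odot> c)) (a \<odot> c)" by (metis Rrefl assoc idem)
  show ?thesis using jmeet[OF j2 j3] by (simp add: assoc)
qed

lemma jleft:
  assumes h: "R (a \<odot> b \<odot> a) a"
  shows "R ((c \<odot> a) \<odot> (c \<odot> b) \<odot> (c \<odot> a)) (c \<odot> a)"
proof -
  have j1: "R ((c \<odot> a) \<odot> a \<odot> (c \<odot> a)) (c \<odot> a)" by (metis Rrefl assoc idem)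
  have j2: "R ((c \<odot> a) \<odot> b \<odot> (c \<odot> a)) (c \<odot> a)" by (rule jtrans[OF j1 h])
  have j3: "R ((c \<odot> a) \<odot> c \<odot> (c \<odot> a)) (c \<odot> a)" by (metis Rrefl assoc idem)
  show ?thesis using jmeet[OF j3 j2] by (simp add: assoc)
qed

end

locale isr =
  fixes add :: "'a \<Rightarrow> 'a \<Rightarrow> 'a" (infixl "\<oplus>" 65)
    and mul :: "'a \<Rightarrow> 'a \<Rightarrow> 'a" (infixl "\<otimes>" 70)
  assumes isr: "idempotent_semiring add mul"
    and ident: "\<And>x y. x \<oplus> x \<otimes> y \<otimes> x \<oplus> x = x"
begin

lemma aa: "(x \<oplus> y) \<oplus> z = x \<oplus> (y \<oplus> z)" using isr unfolding idempotent_semiring_def by blast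
lemma ai: "x \<oplus> x = x" using isr unfolding idempotent_semiring_def by blast
lemma ma: "(x \<otimes> y) \<otimes> z = x \<otimes> (y \<otimes> z)" using isr unfolding idempotent_semiring_def by blast
lemma mi: "x \<otimes> x = x" using isr unfolding idempotent_semiring_def by blast
lemma mi2: "x \<otimes> (x \<otimes> y) = x \<otimes> y" by (metis ma mi)
lemma dl: "x \<otimes> (y \<oplus> z) = x \<otimes> y \<oplus> x \<otimes> z" using isr unfolding idempotent_semiring_def by blast
lemma dr: "(x \<oplus> y) \<otimes> z = x \<otimes> z \<oplus> y \<otimes> z" using isr unfolding idempotent_semiring_def by blast

interpretation A: bandR add "(=)"
  by unfold_locales (auto simp: aa ai)

definition le :: "'a \<Rightarrow> 'a \<Rightarrow> bool" where "le x y \<longleftrightarrow> y = y \<oplus> x \<oplus> y"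

lemma le_refl: "le x x" by (simp add: le_def ai)
lemma le_trans: "le x y \<Longrightarrow> le y z \<Longrightarrow> le x z"
  unfolding le_def using A.jtrans[of z y x] by (metis aa)
lemma le_join: "le x z \<Longrightarrow> le y z \<Longrightarrow> le (x \<oplus> y) z"
  unfolding le_def using A.jmeet[of z x y] by (metis aa)
lemma le_addL: "le x (x \<oplus> y)" unfolding le_def by (metis aa ai)
lemma le_addR: "le y (x \<oplus> y)" unfolding le_def by (metis aa ai)
lemma le_ml: "le x y \<Longrightarrow> le (z \<otimes> x) (z \<otimes> y)" unfolding le_def by (metis dl)
lemma le_mr: "le x y \<Longrightarrow> le (x \<otimes> z) (y \<otimes> z)" unfolding le_def by (metis dr)
lemma le_id: "le (x \<otimes> y \<otimes> x) x" unfolding le_def using ident by (metis aa)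
lemma le_mono_m: "le x y \<Longrightarrow> le z w \<Longrightarrow> le (x \<otimes> z) (y \<otimes> w)"
  using le_ml le_mr le_trans by blast
lemma le_mono_a: "le x y \<Longrightarrow> le z w \<Longrightarrow> le (x \<oplus> z) (y \<oplus> w)"
  using le_addL le_addR le_trans le_join by metis

definition E :: "'a \<Rightarrow> 'a \<Rightarrow> bool" where "E x y \<longleftrightarrow> le x y \<and> le y x"

interpretation M: bandR mul E
  by unfold_locales (auto simp: E_def ma mi le_refl intro: le_trans le_ml le_mr)

lemma sig_iff: "(x \<otimes> y \<otimes> x = x \<otimes> y \<otimes> x \<oplus> x \<oplus> x \<otimes> y \<otimes> x) \<longleftrightarrow> E (x \<otimes> (y \<otimes> x)) x"
  unfolding E_def using le_id[of x y] by (simp add: le_def ma)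


definition sig :: "'a \<Rightarrow> 'a \<Rightarrow> bool" where
  "sig a b \<longleftrightarrow> E (a \<otimes> (b \<otimes> a)) a \<and> E (b \<otimes> (a \<otimes> b)) b"

lemma E_le1: "E x y \<Longrightarrow> le x y" and E_le2: "E x y \<Longrightarrow> le y x" by (auto simp: E_def)

lemma sig_equivp: "equivp sig"
proof (rule equivpI)
  show "reflp sig" unfolding reflp_def sig_def by (simp add: mi M.Rrefl)
  show "symp sig" unfolding symp_def sig_def by blast
  show "transp sig" unfolding transp_def sig_def using M.jtrans by blast
qed

lemma sig_mul: "sig a b \<Longrightarrow> sig c d \<Longrightarrow> sig (a \<otimes> c) (b \<otimes> d)"
  unfolding sig_def
proof (elim conjE, intro conjI)
  assume ab: "E (a \<otimes> (b \<otimes> a)) a" and ba: "E (b \<otimes> (a \<otimes> b)) b"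
    and cd: "E (c \<otimes> (d \<otimes> c)) c" and dc: "E (d \<otimes> (c \<otimes> d)) d"
  have 1: "E ((a \<otimes> c) \<otimes> ((b \<otimes> c) \<otimes> (a \<otimes> c))) (a \<otimes> c)" using M.jright[OF ab] .
  have 2: "E ((b \<otimes> c) \<otimes> ((b \<otimes> d) \<otimes> (b \<otimes> c))) (b \<otimes> c)" using M.jleft[OF cd, of b] .
  show "E (a \<otimes> c \<otimes> (b \<otimes> d \<otimes> (a \<otimes> c))) (a \<otimes> c)"
    using M.jtrans[OF 1 2] by (simp add: ma)
  have 3: "E ((b \<otimes> d) \<otimes> ((b \<otimes> c) \<otimes> (b \<otimes> d))) (b \<otimes> d)" using M.jleft[OF dc, of b] .
  have 4: "E ((b \<otimes> c) \<otimes> ((a \<otimes> c) \<otimes> (b \<otimes> c))) (b \<otimes> c)" using M.jright[OF ba] .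
  show "E (b \<otimes> d \<otimes> (a \<otimes> c \<otimes> (b \<otimes> d))) (b \<otimes> d)"
    using M.jtrans[OF 3 4] by (simp add: ma)
qed

lemma sig_add1:
  assumes ab: "E (a \<otimes> (b \<otimes> a)) a" and cd: "E (c \<otimes> (d \<otimes> c)) c"
  shows "E ((a \<oplus> c) \<otimes> ((b \<oplus> d) \<otimes> (a \<oplus> c))) (a \<oplus> c)"
proof -
  have u: "le ((a \<oplus> c) \<otimes> ((b \<oplus> d) \<otimes> (a \<oplus> c))) (a \<oplus> c)" using le_id by (simp add: ma)
  have "le (a \<otimes> (b \<otimes> a)) ((a \<oplus> c) \<otimes> ((b \<oplus> d) \<otimes> (a \<oplus> c)))"
    by (intro le_mono_m le_addL)
  hence la: "le a ((a \<oplus> c) \<otimes> ((b \<oplus> d) \<otimes> (a \<oplus> c)))" using E_le2[OF ab] le_trans by blast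
  have "le (c \<otimes> (d \<otimes> c)) ((a \<oplus> c) \<otimes> ((b \<oplus> d) \<otimes> (a \<oplus> c)))"
    by (intro le_mono_m le_addR)
  hence lc: "le c ((a \<oplus> c) \<otimes> ((b \<oplus> d) \<otimes> (a \<oplus> c)))" using E_le2[OF cd] le_trans by blast
  show ?thesis unfolding E_def using u le_join[OF la lc] by blast
qed

lemma sig_add: "sig a b \<Longrightarrow> sig c d \<Longrightarrow> sig (a \<oplus> c) (b \<oplus> d)"
  unfolding sig_def using sig_add1 by blast

lemma E_comm: "E (x \<oplus> y) (y \<oplus> x)"
  unfolding E_def by (meson le_addL le_addR le_join)

lemma sig_comm_add: "sig (x \<oplus> y) (y \<oplus> x)"
proof -
  have g: "E (u \<otimes> (v \<otimes> u)) u" if "E v u" for u v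
  proof -
    have "E (u \<otimes> (v \<otimes> u)) (u \<otimes> (u \<otimes> u))" using M.Rl[OF M.Rr[OF that]] .
    thus ?thesis by (simp add: mi)
  qed
  show ?thesis unfolding sig_def using g E_comm M.Rsym by blast
qed

lemma sig_comm_mul: "sig (x \<otimes> y) (y \<otimes> x)"
  unfolding sig_def by (metis M.Rrefl ma mi)

lemma sig_absorb: "sig (x \<oplus> x \<otimes> y) x"
  unfolding sig_def
proof
  have "x \<otimes> (x \<oplus> x \<otimes> y) = x \<oplus> x \<otimes> y" by (simp add: dl mi ma[symmetric])
  hence "(x \<oplus> x \<otimes> y) \<otimes> (x \<otimes> (x \<oplus> x \<otimes> y)) = x \<oplus> x \<otimes> y" by (simp add: mi)
  thus "E ((x \<oplus> x \<otimes> y) \<otimes> (x \<otimes> (x \<oplus> x \<otimes> y))) (x \<oplus> x \<otimes> y)" by (simp add: M.Rrefl)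
  have e: "x \<otimes> ((x \<oplus> x \<otimes> y) \<otimes> x) = x \<oplus> x \<otimes> y \<otimes> x" by (simp add: dl dr mi ma mi2)
  have "le (x \<oplus> x \<otimes> y \<otimes> x) x" by (intro le_join le_refl le_id)
  thus "E (x \<otimes> ((x \<oplus> x \<otimes> y) \<otimes> x)) x" unfolding e E_def using le_addL by blast
qed

lemma sig_dl: "dl_congruence add mul sig"
  unfolding dl_congruence_def semiring_congruence_def
  using sig_equivp sig_add sig_mul sig_comm_add sig_comm_mul sig_absorb by blast

lemma sig_least:
  assumes r: "dl_congruence add mul \<rho>" and s: "sig a b"
  shows "\<rho> a b"
proof -
  have eq: "equivp \<rho>" and ra: "\<And>a b c d. \<rho> a b \<Longrightarrow> \<rho> c d \<Longrightarrow> \<rho> (a \<oplus> c) (b \<oplus> d)"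
    and rm: "\<And>a b c d. \<rho> a b \<Longrightarrow> \<rho> c d \<Longrightarrow> \<rho> (a \<otimes> c) (b \<otimes> d)"
    and ca: "\<And>x y. \<rho> (x \<oplus> y) (y \<oplus> x)" and cm: "\<And>x y. \<rho> (x \<otimes> y) (y \<otimes> x)"
    and ab: "\<And>x y. \<rho> (x \<oplus> x \<otimes> y) x"
    using r unfolding dl_congruence_def semiring_congruence_def by blast+
  have rr: "\<rho> x x" for x using eq by (meson equivp_reflp)
  have rs: "\<rho> x y \<Longrightarrow> \<rho> y x" for x y using eq by (meson equivp_symp)
  have rt: "\<rho> x y \<Longrightarrow> \<rho> y z \<Longrightarrow> \<rho> x z" for x y z using eq by (meson equivp_transp)
  have key: "\<rho> a (a \<otimes> b)" if h: "E (a \<otimes> (b \<otimes> a)) a" for a b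
  proof -
    have h': "a \<otimes> (b \<otimes> a) = a \<otimes> (b \<otimes> a) \<oplus> a \<oplus> a \<otimes> (b \<otimes> a)"
      using E_le2[OF h] unfolding le_def .
    have r1: "\<rho> (a \<otimes> (b \<otimes> a)) (a \<otimes> b)"
      using rm[OF rr[of a] cm[of b a]] by (simp add: ma mi mi2)
    have "\<rho> (a \<otimes> (b \<otimes> a) \<oplus> a \<oplus> a \<otimes> (b \<otimes> a)) (a \<otimes> b \<oplus> a \<oplus> a \<otimes> b)"
      using ra[OF ra[OF r1 rr] r1] .
    moreover have "\<rho> (a \<otimes> b \<oplus> a \<oplus> a \<otimes> b) (a \<oplus> a \<otimes> b \<oplus> a \<otimes> b)"
      using ra[OF ca[of "a \<otimes> b" a] rr] .
    moreover have "a \<oplus> a \<otimes> b \<oplus> a \<otimes> b = a \<oplus> a \<otimes> b" by (simp add: aa ai)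
    ultimately have "\<rho> (a \<otimes> (b \<otimes> a)) a" using ab[of a b] h' rt by metis
    thus ?thesis using r1 rs rt by metis
  qed
  from s have 1: "\<rho> a (a \<otimes> b)" and 2: "\<rho> b (b \<otimes> a)" unfolding sig_def using key by blast+
  show ?thesis using rt[OF rt[OF 1 cm] rs[OF 2]] .
qed

end

theorem theorem2p5:
  fixes add mul :: "'a \<Rightarrow> 'a \<Rightarrow> 'a"
  assumes "idempotent_semiring add mul"
    and "\<forall>x y. add (add x (mul (mul x y) x)) x = x"
  defines "\<sigma> \<equiv> (\<lambda>a b.
      mul (mul a b) a = add (add (mul (mul a b) a) a) (mul (mul a b) a) \<and>
      mul (mul b a) b = add (add (mul (mul b a) b) b) (mul (mul b a) b))"
  shows "dl_congruence add mul \<sigma> \<and> (\<forall>\<rho>. dl_congruence add mul \<rho> \<longrightarrow> (\<forall>a b. \<sigma> a b \<longrightarrow> \<rho> a b))"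
proof -
  interpret isr add mul using assms(1,2) by unfold_locales blast+
  have "\<sigma> = sig" unfolding \<sigma>_def sig_def by (intro ext) (simp add: sig_iff[symmetric])
  thus ?thesis using sig_dl sig_least by blast
qed

end
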